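(* Let $\varphi\in\Delta_1^m$ and let $\mathcal{R}^{\mathrm{use}}_\varphi=\{p\in\mathcal{P}:\exists f\in\mathcal{W}^\varphi \text{ with } f_p>0\}$. Then: (1) there exists $f^\varphi\in\mathcal{W}^\varphi$ with $f^\varphi_p>0$ for all $p\in\mathcal{R}^{\mathrm{use}}_\varphi$; (2) for every $p\in\mathcal{P}$, $p\in\mathcal{R}^{\mathrm{use}}_\varphi$ if and only if $f^\varphi_{e_k}>0$ for all edges $e_k\in p$.
   Context: Let $\mathcal{G}=(\mathcal{V},\mathcal{E})$ be a finite directed graph with an origin $v_o$ and a destination $v_d$, and let $\mathcal{P}$ be the (finite) set of acyclic directed paths from $v_o$ to $v_d$, $n=|\mathcal{P}|$. The set of feasible path-flows is $\mathcal{H}=\{f\in\mathbb{R}^n_{\ge0}:\sum_{p\in\mathcal{P}}f_p=1\}$. For a path-flow $f$, the flow on edge $e_k$ is $f_{e_k}=\sum_{p\ni e_k}f_p$. There is a finite set of states $\Theta=\{\theta_1,\dots,\theta_m\}$; in each state $\theta_s$ each edge $e_k$ has a known cost function $C^{\theta_s}_{e_k}:\mathbb{R}_{\ge0}\to\mathbb{R}_{\ge0}$ that is continuous and strictly increasing. The cost of path $p$ in state $\theta_s$ is $C^{\theta_s}_p(f)=\sum_{e_k\in p}C^{\theta_s}_{e_k}(f_{e_k})$. For $\varphi\in\Delta_1^m:=\{x\in\mathbb{R}^m_{\ge0}:\sum_i x_i=1\}$ the expected costs are $C^\varphi_p(f)=\sum_{s}\varphi_sC^{\theta_s}_p(f)$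 and $C^\varphi_{e_k}(x)=\sum_s\varphi_sC^{\theta_s}_{e_k}(x)$. A flow $f\in\mathcal{H}$ is a $\varphi$-based Wardrop equilibrium ($\varphi$-WE) if for all $p\in\mathcal{P}$ with $f_p>0$ we have $C^\varphi_p(f)\le C^\varphi_r(f)$ for all $r\in\mathcal{P}$; $\mathcal{W}^\varphi$ denotes the set of $\varphi$-WE. It is known that all elements of $\mathcal{W}^\varphi$ induce the same edge-flows, and conversely any $f\in\mathcal{H}$ inducing these edge-flows lies in $\mathcal{W}^\varphi$; the common edge-flow on $e_k$ is denoted $f^\varphi_{e_k}$. *)

theory Defs
  imports "HOL-Analysis.Analysis"
begin

text \<open>Directed graph: vertex set V, edge set E of ordered pairs.
  A path is represented by its list of vertices.\<close>

definition path_edges :: "'v list \<Rightarrow> ('v \<times> 'v) set" where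
  "path_edges p = set (zip p (tl p))"

definition od_paths :: "'v set \<Rightarrow> ('v \<times> 'v) set \<Rightarrow> 'v \<Rightarrow> 'v \<Rightarrow> 'v list set" where
  "od_paths V E vo vd = {p. p \<noteq> [] \<and> hd p = vo \<and> last p = vd \<and> distinct p
       \<and> set p \<subseteq> V \<and> path_edges p \<subseteq> E}"

definition feasible_flows :: "'p set \<Rightarrow> ('p \<Rightarrow> real) set" where
  "feasible_flows P = {f. (\<forall>p\<in>P. f p \<ge> 0) \<and> (\<forall>p. p \<notin> P \<longrightarrow> f p = 0) \<and> (\<Sum>p\<in>P. f p) = 1}"

definition edge_flow :: "'v list set \<Rightarrow> ('v list \<Rightarrow> real) \<Rightarrow> ('v \<times> 'v) \<Rightarrow> real" where
  "edge_flow P f e = (\<Sum>p\<in>{p\<in>P. e \<in> path_edges p}. f p)"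

definition prob_simplex :: "'s set \<Rightarrow> ('s \<Rightarrow> real) set" where
  "prob_simplex \<Theta> = {\<phi>. (\<forall>s\<in>\<Theta>. \<phi> s \<ge> 0) \<and> (\<Sum>s\<in>\<Theta>. \<phi> s) = 1}"

definition exp_edge_cost ::
  "'s set \<Rightarrow> ('s \<Rightarrow> ('v \<times> 'v) \<Rightarrow> real \<Rightarrow> real) \<Rightarrow> ('s \<Rightarrow> real) \<Rightarrow> ('v \<times> 'v) \<Rightarrow> real \<Rightarrow> real" where
  "exp_edge_cost \<Theta> C \<phi> e x = (\<Sum>s\<in>\<Theta>. \<phi> s * C s e x)"

definition exp_path_cost ::
  "'v list set \<Rightarrow> 's set \<Rightarrow> ('s \<Rightarrow> ('v \<times> 'v) \<Rightarrow> real \<Rightarrow> real) \<Rightarrow> ('s \<Rightarrow> real)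
    \<Rightarrow> ('v list \<Rightarrow> real) \<Rightarrow> 'v list \<Rightarrow> real" where
  "exp_path_cost P \<Theta> C \<phi> f p = (\<Sum>e\<in>path_edges p. exp_edge_cost \<Theta> C \<phi> e (edge_flow P f e))"

definition wardrop_eq ::
  "'v list set \<Rightarrow> 's set \<Rightarrow> ('s \<Rightarrow> ('v \<times> 'v) \<Rightarrow> real \<Rightarrow> real) \<Rightarrow> ('s \<Rightarrow> real)
    \<Rightarrow> ('v list \<Rightarrow> real) set" where
  "wardrop_eq P \<Theta> C \<phi> = {f \<in> feasible_flows P. \<forall>p\<in>P. f p > 0 \<longrightarrow>
       (\<forall>r\<in>P. exp_path_cost P \<Theta> C \<phi> f p \<le> exp_path_cost P \<Theta> C \<phi> f r)}"

definition used_paths ::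
  "'v list set \<Rightarrow> 's set \<Rightarrow> ('s \<Rightarrow> ('v \<times> 'v) \<Rightarrow> real \<Rightarrow> real) \<Rightarrow> ('s \<Rightarrow> real) \<Rightarrow> 'v list set" where
  "used_paths P \<Theta> C \<phi> = {p\<in>P. \<exists>f\<in>wardrop_eq P \<Theta> C \<phi>. f p > 0}"

end

theory Submission
  imports Defs
begin

lemma pe_Nil[simp]: "path_edges [] = {}" and pe_single[simp]: "path_edges [x] = {}"
  and pe_Cons2[simp]: "path_edges (x#y#xs) = insert (x,y) (path_edges (y#xs))"
  by (auto simp: path_edges_def)

lemma pe_finite[simp]: "finite (path_edges xs)"
  by (simp add: path_edges_def)

lemma pe_append: "path_edges (xs @ v # ys) = path_edges (xs@[v]) \<union> path_edges (v#ys)"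
proof (induction xs)
  case Nil then show ?case by simp
next
  case (Cons a xs) then show ?case by (cases xs) auto
qed

lemma pe_mem: "(a,b) \<in> path_edges xs \<Longrightarrow> a \<in> set (butlast xs) \<and> b \<in> set (tl xs)"
proof (induction xs rule: induct_list012)
  case (3 x y zs) then show ?case by (cases zs) auto
qed auto

lemma pe_decomp: "(a,b) \<in> path_edges xs \<Longrightarrow> \<exists>u w. xs = u @ a # b # w"
proof (induction xs rule: induct_list012)
  case (3 x y zs)
  show ?case
  proof (cases "(a,b) = (x,y)")
    case True then have "x#y#zs = [] @ a # b # zs" by simp
    then show ?thesis by blast
  next
    case False
    then have "(a,b) \<in> path_edges (y#zs)" using 3(3) by auto
    then obtain u w where "y # zs = u @ a # b # w" using 3(2) by blast
    then show ?thesis by (metis append_Cons)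
  qed
qed auto

lemma pe_prefix: "path_edges xs \<subseteq> path_edges (xs @ ys)"
  unfolding path_edges_def
proof (induction xs rule: induct_list012)
  case (3 x y zs) then show ?case by auto
next
  case (2 x) then show ?case by simp
qed simp

lemma shortcut:
  "xs \<noteq> [] \<Longrightarrow> \<exists>ys. ys \<noteq> [] \<and> hd ys = hd xs \<and> last ys = last xs \<and> distinct ys
     \<and> set ys \<subseteq> set xs \<and> path_edges ys \<subseteq> path_edges xs"
proof (induction "length xs" arbitrary: xs rule: less_induct)
  case less
  show ?case
  proof (cases "distinct xs")
    case True then show ?thesis using less.prems by blast
  next
    case False
    then obtain a y b c where xs: "xs = a@[y]@b@[y]@c" using not_distinct_decomp by blast
    let ?z = "a@[y]@c"
    have "length ?z < length xs" using xs by simp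
    then obtain ys where ys: "ys \<noteq> [] \<and> hd ys = hd ?z \<and> last ys = last ?z \<and> distinct ys
     \<and> set ys \<subseteq> set ?z \<and> path_edges ys \<subseteq> path_edges ?z" using less(1)[of ?z] by auto
    have e1: "path_edges ?z = path_edges (a@[y]) \<union> path_edges (y#c)"
      using pe_append[of a y c] by simp
    have e2: "path_edges xs = path_edges (a@[y]) \<union> path_edges (y#b@[y]@c)"
      using pe_append[of a y "b@[y]@c"] xs by simp
    have e3: "path_edges (y#b@[y]@c) = path_edges (y#b@[y]) \<union> path_edges (y#c)"
      using pe_append[of "y#b" y c] by simp
    have "hd ?z = hd xs" using xs by (cases a) auto
    moreover have "last ?z = last xs" using xs by (cases c) auto
    moreover have "set ?z \<subseteq> set xs" using xs by auto
    moreover have "path_edges ys \<subseteq> path_edges xs"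
    proof -
      have "path_edges ?z \<subseteq> path_edges xs" unfolding e1 e2 e3 by blast
      then show ?thesis using ys by blast
    qed
    moreover have "set ys \<subseteq> set xs" using ys \<open>set ?z \<subseteq> set xs\<close> by blast
    ultimately show ?thesis using ys by auto
  qed
qed

lemma incr_distinct:
  fixes d :: "'a \<Rightarrow> real"
  shows "(\<forall>(x,y)\<in>path_edges xs. d x < d y) \<Longrightarrow> distinct xs \<and> (\<forall>z\<in>set (tl xs). d (hd xs) < d z)"
proof (induction xs rule: induct_list012)
  case (3 x y zs)
  then have IH: "distinct (y#zs) \<and> (\<forall>z\<in>set zs. d y < d z)" and xy: "d x < d y" by auto
  then have "\<forall>z\<in>set (y#zs). d x < d z" by auto
  then have "x \<notin> set (y#zs)" by auto
  then show ?case using IH \<open>\<forall>z\<in>set (y#zs). d x < d z\<close> by simp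
qed auto

lemma telescope:
  fixes d :: "'a \<Rightarrow> real"
  shows "distinct xs \<Longrightarrow> xs \<noteq> [] \<Longrightarrow> (\<forall>(x,y)\<in>path_edges xs. d y = d x + w (x,y)) \<Longrightarrow>
    sum w (path_edges xs) = d (last xs) - d (hd xs)"
proof (induction xs rule: induct_list012)
  case (3 x y zs)
  have "(x,y) \<notin> path_edges (y#zs)" using pe_mem[of x y "y#zs"] "3.prems"(1)
    by (metis distinct.simps(2) in_set_butlastD)
  then have "sum w (path_edges (x#y#zs)) = w (x,y) + sum w (path_edges (y#zs))" by simp
  also have "sum w (path_edges (y#zs)) = d (last (y#zs)) - d y" using 3 by auto
  finally have "sum w (path_edges (x#y#zs)) = w (x,y) + (d (last (y#zs)) - d y)" .
  moreover have "d y = d x + w (x,y)" using "3.prems"(3) by simp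
  ultimately show ?case by simp
qed auto

locale net =
  fixes V :: "'v set" and E :: "('v \<times> 'v) set" and vo vd :: 'v
    and \<Theta> :: "'s set" and C :: "'s \<Rightarrow> ('v \<times> 'v) \<Rightarrow> real \<Rightarrow> real" and \<phi> :: "'s \<Rightarrow> real"
  assumes finV: "finite V" and EV: "E \<subseteq> V \<times> V" and voV: "vo \<in> V" and vdV: "vd \<in> V"
    and Pne: "od_paths V E vo vd \<noteq> {}"
    and finT: "finite \<Theta>"
    and cont: "\<And>s e. s \<in> \<Theta> \<Longrightarrow> e \<in> E \<Longrightarrow> continuous_on {0..} (C s e)"
    and smono: "\<And>s e. s \<in> \<Theta> \<Longrightarrow> e \<in> E \<Longrightarrow> strict_mono_on {0..} (C s e)"
    and Cnn: "\<And>s e x. s \<in> \<Theta> \<Longrightarrow> e \<in> E \<Longrightarrow> x \<ge> 0 \<Longrightarrow> C s e x \<ge> 0"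
    and phi: "\<phi> \<in> prob_simplex \<Theta>"
begin

abbreviation "P \<equiv> od_paths V E vo vd"
abbreviation "c \<equiv> exp_edge_cost \<Theta> C \<phi>"
abbreviation "ef \<equiv> edge_flow P"
abbreviation "cost \<equiv> exp_path_cost P \<Theta> C \<phi>"
abbreviation "WE \<equiv> wardrop_eq P \<Theta> C \<phi>"
abbreviation "K \<equiv> feasible_flows P"
abbreviation "U \<equiv> \<Union> (path_edges ` P)"

definition W :: "('v list \<Rightarrow> real) \<Rightarrow> ('v \<times> 'v) \<Rightarrow> real" where
  "W f e = c e (ef f e)"

lemma cost_W: "cost f p = sum (W f) (path_edges p)"
  by (simp add: exp_path_cost_def W_def)

lemma finP: "finite P"
proof -
  have "P \<subseteq> {xs. set xs \<subseteq> V \<and> distinct xs}" by (auto simp: od_paths_def)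
  then show ?thesis using finite_subset_distinct[OF finV] finite_subset by blast
qed

lemma finU: "finite U" using finP by simp

lemma P_E: "p \<in> P \<Longrightarrow> path_edges p \<subseteq> E" by (simp add: od_paths_def)
lemma U_E: "U \<subseteq> E" using P_E by blast

lemma c_mono_strict: assumes "e \<in> E" "0 \<le> x" "x < y" shows "c e x < c e y"
proof -
  have phn: "\<forall>s\<in>\<Theta>. \<phi> s \<ge> 0" and ph1: "sum \<phi> \<Theta> = 1" using phi by (auto simp: prob_simplex_def)
  obtain s0 where s0: "s0 \<in> \<Theta>" "\<phi> s0 > 0"
  proof (rule ccontr)
    assume "\<not> thesis"
    then have "\<forall>s\<in>\<Theta>. \<phi> s \<le> 0" using that by force
    then have "sum \<phi> \<Theta> \<le> 0" by (simp add: sum_nonpos)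
    then show False using ph1 by simp
  qed
  have lt: "\<And>s. s \<in> \<Theta> \<Longrightarrow> C s e x < C s e y"
    using smono assms by (auto simp: strict_mono_on_def)
  show ?thesis unfolding exp_edge_cost_def
  proof (rule sum_strict_mono_ex1[OF finT])
    show "\<forall>s\<in>\<Theta>. \<phi> s * C s e x \<le> \<phi> s * C s e y"
      using lt phn by (simp add: less_imp_le mult_left_mono)
    show "\<exists>s\<in>\<Theta>. \<phi> s * C s e x < \<phi> s * C s e y"
      using s0 lt[OF s0(1)] by (intro bexI[of _ s0]) (simp_all add: mult_strict_left_mono)
  qed
qed

lemma c_mono: "e \<in> E \<Longrightarrow> 0 \<le> x \<Longrightarrow> x \<le> y \<Longrightarrow> c e x \<le> c e y"
  using c_mono_strict by (metis order_le_less)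

lemma c_nonneg: assumes "e \<in> E" "0 \<le> x" shows "c e x \<ge> 0"
proof -
  have "\<forall>s\<in>\<Theta>. \<phi> s \<ge> 0" using phi by (auto simp: prob_simplex_def)
  then show ?thesis using Cnn assms unfolding exp_edge_cost_def by (simp add: sum_nonneg)
qed

lemma c_pos: "e \<in> E \<Longrightarrow> 0 < x \<Longrightarrow> c e x > 0"
  using c_mono_strict[of e 0 x] c_nonneg[of e 0] by simp

lemma c_cont: "e \<in> E \<Longrightarrow> continuous_on {0..} (c e)"
  unfolding exp_edge_cost_def using cont
  by (intro continuous_on_sum continuous_on_mult continuous_on_const) auto

lemma K_nonneg: "f \<in> K \<Longrightarrow> p \<in> P \<Longrightarrow> f p \<ge> 0" by (simp add: feasible_flows_def)
lemma K_out: "f \<in> K \<Longrightarrow> p \<notin> P \<Longrightarrow> f p = 0" by (simp add: feasible_flows_def)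
lemma K_sum: "f \<in> K \<Longrightarrow> sum f P = 1" by (simp add: feasible_flows_def)

lemma ef_nonneg: "f \<in> K \<Longrightarrow> ef f e \<ge> 0"
  unfolding edge_flow_def by (rule sum_nonneg) (simp add: K_nonneg)

lemma ef_le1: assumes "f \<in> K" shows "ef f e \<le> 1"
proof -
  have "ef f e \<le> sum f P" unfolding edge_flow_def
    by (rule sum_mono2[OF finP]) (auto simp: K_nonneg assms)
  then show ?thesis using K_sum[OF assms] by simp
qed

lemma ef_ge: assumes "f \<in> K" "p \<in> P" "e \<in> path_edges p" shows "f p \<le> ef f e"
  unfolding edge_flow_def
  by (rule member_le_sum) (use assms finP K_nonneg in auto)

lemma ef_pos_ex: assumes "f \<in> K" "ef f e > 0" shows "\<exists>q\<in>P. e \<in> path_edges q \<and> f q > 0"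
proof (rule ccontr)
  assume "\<not> ?thesis"
  then have "\<forall>q\<in>{q\<in>P. e \<in> path_edges q}. f q \<le> 0" by auto
  then have "ef f e \<le> 0" unfolding edge_flow_def by (intro sum_nonpos) auto
  then show False using assms by simp
qed

lemma ef_notU: "e \<notin> U \<Longrightarrow> ef f e = 0"
  unfolding edge_flow_def by (rule sum.neutral) auto

lemma K_pos_ex: assumes "f \<in> K" shows "\<exists>q\<in>P. f q > 0"
proof (rule ccontr)
  assume "\<not> ?thesis"
  then have "sum f P \<le> 0" by (simp add: sum_nonpos not_less)
  then show False using K_sum[OF assms] by simp
qed

lemma WE_K: "f \<in> WE \<Longrightarrow> f \<in> K" by (simp add: wardrop_eq_def)

lemma WE_L: assumes "f \<in> WE"
  obtains L where "\<And>p. p \<in> P \<Longrightarrow> L \<le> cost f p" "\<And>p. p \<in> P \<Longrightarrow> f p > 0 \<Longrightarrow> cost f p = L"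
proof -
  obtain q where q: "q \<in> P" "f q > 0" using K_pos_ex WE_K assms by blast
  have min: "\<And>p r. p \<in> P \<Longrightarrow> f p > 0 \<Longrightarrow> r \<in> P \<Longrightarrow> cost f p \<le> cost f r"
    using assms by (simp add: wardrop_eq_def)
  show ?thesis
    by (rule that[of "cost f q"]) (use min q in \<open>auto intro: order_antisym\<close>)
qed

lemma cost_cong: "(\<And>e. ef f e = ef g e) \<Longrightarrow> cost f p = cost g p"
  by (simp add: exp_path_cost_def)

lemma swap_id: "(\<Sum>p\<in>P. h p * cost f p) = (\<Sum>e\<in>U. ef h e * W f e)"
proof -
  have "(\<Sum>p\<in>P. h p * cost f p) = (\<Sum>p\<in>P. \<Sum>e\<in>U. if e \<in> path_edges p then h p * W f e else 0)"
  proof (rule sum.cong[OF refl])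
    fix p assume p: "p \<in> P"
    have "U \<inter> path_edges p = path_edges p" using p by blast
    then have "sum (W f) (path_edges p) = (\<Sum>e\<in>U. if e \<in> path_edges p then W f e else 0)"
      using sum.inter_restrict[OF finU, of "W f" "path_edges p"] by simp
    then show "h p * cost f p = (\<Sum>e\<in>U. if e \<in> path_edges p then h p * W f e else 0)"
      by (simp add: cost_W sum_distrib_left if_distrib cong: if_cong)
  qed
  also have "\<dots> = (\<Sum>e\<in>U. \<Sum>p\<in>P. if e \<in> path_edges p then h p * W f e else 0)"
    by (rule sum.swap)
  also have "\<dots> = (\<Sum>e\<in>U. ef h e * W f e)"
  proof (rule sum.cong[OF refl])
    fix e
    have "ef h e = (\<Sum>p\<in>P. if e \<in> path_edges p then h p else 0)"
      unfolding edge_flow_def by (rule sum.inter_filter[OF finP])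
    moreover have "(\<Sum>p\<in>P. if e \<in> path_edges p then h p * W f e else 0)
       = (\<Sum>p\<in>P. (if e \<in> path_edges p then h p else 0) * W f e)" by (intro sum.cong) auto
    ultimately show "(\<Sum>p\<in>P. if e \<in> path_edges p then h p * W f e else 0) = ef h e * W f e"
      by (simp add: sum_distrib_right)
  qed
  finally show ?thesis .
qed

lemma VI: assumes "f \<in> WE" "g \<in> K"
  shows "(\<Sum>e\<in>U. ef f e * W f e) \<le> (\<Sum>e\<in>U. ef g e * W f e)"
proof -
  obtain L where L1: "\<And>p. p \<in> P \<Longrightarrow> L \<le> cost f p" and L2: "\<And>p. p \<in> P \<Longrightarrow> f p > 0 \<Longrightarrow> cost f p = L"
    using WE_L[OF assms(1)] by blast
  have fK: "f \<in> K" using WE_K assms by blast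
  have "(\<Sum>p\<in>P. f p * cost f p) = (\<Sum>p\<in>P. f p * L)"
  proof (rule sum.cong[OF refl])
    fix p assume "p \<in> P"
    then show "f p * cost f p = f p * L" using L2 K_nonneg[OF fK] by (cases "f p > 0") force+
  qed
  also have "\<dots> = L" using K_sum[OF fK] by (simp add: sum_distrib_right[symmetric])
  also have "\<dots> = (\<Sum>p\<in>P. g p * L)" using K_sum[OF assms(2)] by (simp add: sum_distrib_right[symmetric])
  also have "\<dots> \<le> (\<Sum>p\<in>P. g p * cost f p)"
    by (rule sum_mono) (simp add: L1 K_nonneg[OF assms(2)] mult_left_mono)
  finally show ?thesis by (simp add: swap_id)
qed

lemma WE_unique: assumes "f \<in> WE" "g \<in> WE" shows "ef f e = ef g e"
proof (cases "e \<in> U")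
  case False then show ?thesis by (simp add: ef_notU)
next
  case True
  have fK: "f \<in> K" and gK: "g \<in> K" using assms WE_K by auto
  have 1: "(\<Sum>e\<in>U. ef f e * W f e) \<le> (\<Sum>e\<in>U. ef g e * W f e)" using VI assms fK gK by blast
  have 2: "(\<Sum>e\<in>U. ef g e * W g e) \<le> (\<Sum>e\<in>U. ef f e * W g e)" using VI assms fK gK by blast
  let ?t = "\<lambda>e. (ef f e - ef g e) * (W f e - W g e)"
  have tnn: "\<And>e. e \<in> U \<Longrightarrow> ?t e \<ge> 0"
  proof -
    fix e assume e: "e \<in> U"
    then have eE: "e \<in> E" using U_E by blast
    show "?t e \<ge> 0"
    proof (cases "ef f e \<le> ef g e")
      case True
      then have "W f e \<le> W g e" unfolding W_def using c_mono[OF eE ef_nonneg[OF fK]] by blast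
      then show ?thesis using True by (simp add: mult_nonpos_nonpos)
    next
      case False
      then have "W g e \<le> W f e" unfolding W_def using c_mono[OF eE ef_nonneg[OF gK]] by simp
      then show ?thesis using False by simp
    qed
  qed
  have "sum ?t U = (\<Sum>e\<in>U. ef f e * W f e) - (\<Sum>e\<in>U. ef g e * W f e)
     + ((\<Sum>e\<in>U. ef g e * W g e) - (\<Sum>e\<in>U. ef f e * W g e))"
    by (simp add: sum_subtractf[symmetric] sum.distrib[symmetric] algebra_simps)
  also have "\<dots> \<le> 0" using 1 2 by simp
  finally have "sum ?t U \<le> 0" .
  then have "sum ?t U = 0" using sum_nonneg[of U ?t] tnn by force
  then have "?t e = 0" using sum_nonneg_eq_0_iff[OF finU, of ?t] tnn True by blast
  moreover have "e \<in> E" using True U_E by blast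
  ultimately show ?thesis unfolding W_def
    using c_mono_strict[of e "ef f e" "ef g e"] c_mono_strict[of e "ef g e" "ef f e"]
      ef_nonneg[OF fK, of e] ef_nonneg[OF gK, of e]
    by (cases "ef f e < ef g e"; cases "ef g e < ef f e") auto
qed

end

lemma pe_disj: assumes "distinct (X @ u # Y)" shows "path_edges (X@[u]) \<inter> path_edges (u#Y) = {}"
proof (rule ccontr)
  assume "\<not> ?thesis"
  then obtain a b where ab: "(a,b) \<in> path_edges (X@[u])" "(a,b) \<in> path_edges (u#Y)" by auto
  then have "a \<in> set X" using pe_mem[of a b "X@[u]"] by simp
  moreover have "a \<in> set (u#Y)" using pe_mem[OF ab(2)] in_set_butlastD by metis
  ultimately show False using assms by auto
qed

lemma sum_split: assumes "distinct (X @ u # Y)"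
  shows "sum g (path_edges (X@u#Y)) = sum g (path_edges (X@[u])) + sum g (path_edges (u#Y))"
  unfolding pe_append[of X u Y] by (rule sum.union_disjoint) (use pe_disj[OF assms] in auto)

context net begin

definition Qv :: "'v \<Rightarrow> 'v list set" where
  "Qv v = {a. a \<noteq> [] \<and> hd a = vo \<and> last a = v \<and> distinct a \<and> set a \<subseteq> V \<and> path_edges a \<subseteq> E}"

definition D :: "('v list \<Rightarrow> real) \<Rightarrow> 'v \<Rightarrow> real" where
  "D f v = Min ((\<lambda>a. sum (W f) (path_edges a)) ` Qv v)"

lemma finQ: "finite (Qv v)"
proof -
  have "Qv v \<subseteq> {xs. set xs \<subseteq> V \<and> distinct xs}" by (auto simp: Qv_def)
  then show ?thesis using finite_subset_distinct[OF finV] finite_subset by blast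
qed

lemma W_nonneg: "f \<in> K \<Longrightarrow> e \<in> E \<Longrightarrow> W f e \<ge> 0"
  unfolding W_def by (rule c_nonneg) (auto simp: ef_nonneg)

lemma sumW_nonneg: "f \<in> K \<Longrightarrow> path_edges a \<subseteq> E \<Longrightarrow> sum (W f) (path_edges a) \<ge> 0"
  by (rule sum_nonneg) (use W_nonneg in blast)

lemma pref: assumes f: "f \<in> WE" and q: "q \<in> P" "f q > 0" and qs: "q = X @ u # Y"
  shows "sum (W f) (path_edges (X@[u])) = D f u"
proof -
  have fK: "f \<in> K" using WE_K f by blast
  obtain L where L1: "\<And>p. p \<in> P \<Longrightarrow> L \<le> cost f p" and L2: "\<And>p. p \<in> P \<Longrightarrow> f p > 0 \<Longrightarrow> cost f p = L"
    using WE_L[OF f] by blast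
  have qd: "distinct q" "set q \<subseteq> V" "path_edges q \<subseteq> E" "hd q = vo" "last q = vd" "q \<noteq> []"
    using q by (auto simp: od_paths_def)
  have peXu: "path_edges (X@[u]) \<subseteq> path_edges q" using pe_prefix[of "X@[u]" Y] qs by simp
  have "hd (X@[u]) = vo" using qd(4) qs by (cases X) auto
  then have XuQ: "X@[u] \<in> Qv u" unfolding Qv_def using qd qs peXu by auto
  let ?g = "\<lambda>a. sum (W f) (path_edges a)"
  have fin: "finite (?g ` Qv u)" using finQ by simp
  have le: "D f u \<le> ?g (X@[u])" unfolding D_def using fin XuQ by (simp add: Min_le)
  show ?thesis
  proof (rule ccontr)
    assume "\<not> ?thesis"
    then have lt: "D f u < ?g (X@[u])" using le by simp
    have "D f u \<in> ?g ` Qv u" unfolding D_def using fin XuQ by (intro Min_in) auto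
    then obtain a where a: "a \<in> Qv u" "?g a = D f u" by auto
    have ad: "a \<noteq> []" "hd a = vo" "last a = u" "set a \<subseteq> V" "path_edges a \<subseteq> E"
      using a(1) by (auto simp: Qv_def)
    obtain a' where a': "a = a' @ [u]" using ad(1,3) append_butlast_last_id by metis
    let ?w = "a' @ u # Y"
    have pew: "path_edges ?w = path_edges a \<union> path_edges (u#Y)" using pe_append[of a' u Y] a' by simp
    have peuY: "path_edges (u#Y) \<subseteq> path_edges q" using pe_append[of X u Y] qs by simp
    obtain r where r: "r \<noteq> []" "hd r = hd ?w" "last r = last ?w" "distinct r" "set r \<subseteq> set ?w"
      "path_edges r \<subseteq> path_edges ?w" using shortcut[of ?w] by auto
    have "hd ?w = vo" using ad(2) a' by (cases a') auto
    moreover have "last ?w = vd" using qd(5) qs by simp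
    moreover have "set ?w \<subseteq> V" using ad(4) a' qd(2) qs by auto
    moreover have "path_edges ?w \<subseteq> E" using pew ad(5) peuY qd(3) by blast
    ultimately have rP: "r \<in> P" using r unfolding od_paths_def by auto
    have wE: "path_edges ?w \<subseteq> E" using pew ad(5) peuY qd(3) by blast
    have "cost f r = ?g r" by (simp add: cost_W)
    also have "\<dots> \<le> ?g ?w"
      by (rule sum_mono2) (use r(6) wE W_nonneg[OF fK] in auto)
    also have "\<dots> \<le> ?g a + ?g (u#Y)"
    proof -
      have "?g ?w = ?g a + ?g (u#Y) - sum (W f) (path_edges a \<inter> path_edges (u#Y))"
        unfolding pew by (rule sum_Un) auto
      moreover have "sum (W f) (path_edges a \<inter> path_edges (u#Y)) \<ge> 0"
        by (rule sum_nonneg) (use ad(5) W_nonneg[OF fK] in auto)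
      ultimately show ?thesis by simp
    qed
    also have "\<dots> < ?g (X@[u]) + ?g (u#Y)" using a(2) lt by simp
    also have "\<dots> = ?g q" using sum_split[of X u Y "W f"] qd(1) qs by simp
    also have "\<dots> = L" using L2 q cost_W by metis
    finally show False using L1[OF rP] by simp
  qed
qed

lemma tight: assumes f: "f \<in> WE" and pos: "ef f (u,w) > 0"
  shows "D f w = D f u + W f (u,w)"
proof -
  obtain q where q: "q \<in> P" "(u,w) \<in> path_edges q" "f q > 0" using ef_pos_ex[OF WE_K[OF f] pos] by blast
  obtain X Y where qs: "q = X @ u # w # Y" using pe_decomp[OF q(2)] by blast
  have d: "distinct q" using q by (simp add: od_paths_def)
  have 1: "sum (W f) (path_edges (X@[u])) = D f u" using pref[OF f q(1,3), of X u "w#Y"] qs by simp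
  have 2: "sum (W f) (path_edges ((X@[u])@[w])) = D f w" using pref[OF f q(1,3), of "X@[u]" w Y] qs by simp
  have "distinct (X @ u # [w])" using d qs by simp
  then have "sum (W f) (path_edges (X@u#[w])) = sum (W f) (path_edges (X@[u])) + sum (W f) (path_edges [u,w])"
    by (rule sum_split)
  then show ?thesis using 1 2 by simp
qed

lemma ef_pos_E: "f \<in> K \<Longrightarrow> ef f e > 0 \<Longrightarrow> e \<in> E"
  using ef_pos_ex P_E by blast

lemma posD: assumes f: "f \<in> WE" and pos: "ef f (u,w) > 0" shows "D f u < D f w"
proof -
  have "W f (u,w) > 0" unfolding W_def using c_pos ef_pos_E[OF WE_K[OF f] pos] pos by blast
  then show ?thesis using tight[OF assms] by simp
qed

lemma pos_distinct: assumes f: "f \<in> WE" and "\<forall>e\<in>path_edges xs. ef f e > 0" shows "distinct xs"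
  using incr_distinct[where d="D f" and xs=xs] posD[OF f] assms(2) by auto

lemma D_vo: assumes f: "f \<in> WE" shows "D f vo = 0"
proof -
  let ?g = "\<lambda>a. sum (W f) (path_edges a)"
  have fin: "finite (?g ` Qv vo)" using finQ by simp
  have inQ: "[vo] \<in> Qv vo" using voV by (simp add: Qv_def)
  have "?g [vo] \<in> ?g ` Qv vo" using inQ by blast
  then have "0 \<in> ?g ` Qv vo" by simp
  then have "D f vo \<le> 0" unfolding D_def using Min_le[OF fin] by blast
  moreover have "D f vo \<in> ?g ` Qv vo" unfolding D_def using fin inQ by (intro Min_in) auto
  then have "D f vo \<ge> 0" using sumW_nonneg[OF WE_K[OF f]] by (auto simp: Qv_def)
  ultimately show ?thesis by simp
qed

lemma D_vd: assumes f: "f \<in> WE" and q: "q \<in> P" "f q > 0" shows "cost f q = D f vd"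
proof -
  have "q \<noteq> []" "last q = vd" using q by (auto simp: od_paths_def)
  then have qs: "q = butlast q @ vd # []" using append_butlast_last_id by metis
  show ?thesis using pref[OF f q qs] qs cost_W by metis
qed

lemma pos_cost: assumes f: "f \<in> WE" and r: "r \<in> P" and pos: "\<forall>e\<in>path_edges r. ef f e > 0"
  shows "cost f r = D f vd"
proof -
  have rd: "distinct r" "r \<noteq> []" "hd r = vo" "last r = vd" using r by (auto simp: od_paths_def)
  have "\<forall>(x,y)\<in>path_edges r. D f y = D f x + W f (x,y)" using tight[OF f] pos by auto
  then have "sum (W f) (path_edges r) = D f vd - D f vo" using telescope[OF rd(1,2)] rd by auto
  then show ?thesis using D_vo[OF f] cost_W by simp
qed

lemma pos_min: assumes f: "f \<in> WE" and r: "r \<in> P" and pos: "\<forall>e\<in>path_edges r. ef f e > 0"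
  and r': "r' \<in> P" shows "cost f r \<le> cost f r'"
proof -
  obtain L where L1: "\<And>p. p \<in> P \<Longrightarrow> L \<le> cost f p" and L2: "\<And>p. p \<in> P \<Longrightarrow> f p > 0 \<Longrightarrow> cost f p = L"
    using WE_L[OF f] by blast
  obtain q where q: "q \<in> P" "f q > 0" using K_pos_ex WE_K f by blast
  have "cost f r = cost f q" using pos_cost[OF f r pos] D_vd[OF f q] by simp
  then show ?thesis using L1[OF r'] L2[OF q] by simp
qed

lemma WE_same: assumes f: "f \<in> WE" and h: "h \<in> K" and same: "\<And>e. ef h e = ef f e"
  shows "h \<in> WE"
  unfolding wardrop_eq_def
proof (intro CollectI conjI ballI impI h)
  fix p r assume p: "p \<in> P" "h p > 0" and r: "r \<in> P"
  have "\<forall>e\<in>path_edges p. ef f e > 0" using ef_ge[OF h p(1)] p(2) same by (metis less_le_trans)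
  then have "cost f p \<le> cost f r" using pos_min[OF f p(1) _ r] by blast
  then show "cost h p \<le> cost h r" using cost_cong[of h f] same by metis
qed

end

lemma pe_nth: "Suc i < length xs \<Longrightarrow> (xs!i, xs!Suc i) \<in> path_edges xs"
  unfolding path_edges_def in_set_conv_nth
  by (rule exI[of _ i]) (auto simp: nth_tl)

context net begin

lemma ef_lin: "ef (\<lambda>x. h x + k * (a x + b x - c1 x - d x)) e = ef h e + k * (ef a e + ef b e - ef c1 e - ef d e)"
  unfolding edge_flow_def by (simp add: sum.distrib sum_subtractf sum_distrib_left algebra_simps)

lemma ef_delta: "y \<in> P \<Longrightarrow> ef (\<lambda>x. if x = y then 1 else 0) e = (if e \<in> path_edges y then 1 else 0)"
  unfolding edge_flow_def using finP by (simp add: sum.delta)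

lemma ind_split: assumes "distinct (X @ u # Y)"
  shows "(if e \<in> path_edges (X @ u # Y) then 1 else 0::real)
       = (if e \<in> path_edges (X @ [u]) then 1 else 0) + (if e \<in> path_edges (u # Y) then 1 else 0)"
  using pe_disj[OF assms] pe_append[of X u Y] by auto

lemma step:
  assumes h: "h \<in> WE" and q: "q \<in> P" "h q > 0" "q = A @ u # B"
    and q': "q' \<in> P" "h q' > 0" "q' = a' @ u # w # b'"
  shows "A @ u # w # b' \<in> P \<and> (\<exists>h'\<in>WE. h' (A @ u # w # b') > 0)"
proof -
  define n1 where "n1 = A @ u # w # b'"
  define n2 where "n2 = a' @ u # B"
  have hK: "h \<in> K" using WE_K h by blast
  have qd: "distinct q" "set q \<subseteq> V" "path_edges q \<subseteq> E" "hd q = vo" "last q = vd" "q \<noteq> []"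
    using q by (auto simp: od_paths_def)
  have q'd: "distinct q'" "set q' \<subseteq> V" "path_edges q' \<subseteq> E" "hd q' = vo" "last q' = vd" "q' \<noteq> []"
    using q' by (auto simp: od_paths_def)
  have peq: "path_edges q = path_edges (A@[u]) \<union> path_edges (u#B)" using pe_append q(3) by metis
  have peq': "path_edges q' = path_edges (a'@[u]) \<union> path_edges (u#w#b')" using pe_append q'(3) by metis
  have pen1: "path_edges n1 = path_edges (A@[u]) \<union> path_edges (u#w#b')" using pe_append n1_def by metis
  have pen2: "path_edges n2 = path_edges (a'@[u]) \<union> path_edges (u#B)" using pe_append n2_def by metis
  have posq: "\<forall>e\<in>path_edges q \<union> path_edges q'. ef h e > 0"
    using ef_ge[OF hK q(1)] ef_ge[OF hK q'(1)] q(2) q'(2) by (metis Un_iff less_le_trans)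
  have pos1: "\<forall>e\<in>path_edges n1. ef h e > 0" using posq pen1 peq peq' by blast
  have pos2: "\<forall>e\<in>path_edges n2. ef h e > 0" using posq pen2 peq peq' by blast
  have d1: "distinct n1" using pos_distinct[OF h pos1] .
  have d2: "distinct n2" using pos_distinct[OF h pos2] .
  have n1P: "n1 \<in> P" unfolding od_paths_def
  proof (intro CollectI conjI)
    show "n1 \<noteq> []" by (simp add: n1_def)
    show "hd n1 = vo" using qd(4) q(3) n1_def by (cases A) auto
    show "last n1 = vd" using q'd(5) q'(3) n1_def by simp
    show "distinct n1" by (fact d1)
    show "set n1 \<subseteq> V" using qd(2) q'd(2) q(3) q'(3) n1_def by auto
    show "path_edges n1 \<subseteq> E" using qd(3) q'd(3) peq peq' pen1 by blast
  qed
  have n2P: "n2 \<in> P" unfolding od_paths_def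
  proof (intro CollectI conjI)
    show "n2 \<noteq> []" by (simp add: n2_def)
    show "hd n2 = vo" using q'd(4) q'(3) n2_def by (cases a') auto
    show "last n2 = vd" using qd(5) q(3) n2_def by simp
    show "distinct n2" by (fact d2)
    show "set n2 \<subseteq> V" using qd(2) q'd(2) q(3) q'(3) n2_def by auto
    show "path_edges n2 \<subseteq> E" using qd(3) q'd(3) peq' peq pen2 by blast
  qed
  define \<epsilon> where "\<epsilon> = min (h q) (h q') / 2"
  have eps: "\<epsilon> > 0" "h q \<ge> 2*\<epsilon>" "h q' \<ge> 2*\<epsilon>" using q(2) q'(2) by (auto simp: \<epsilon>_def)
  let ?d = "\<lambda>y x. if x = y then 1 else (0::real)"
  define h' where "h' = (\<lambda>x. h x + \<epsilon> * (?d n1 x + ?d n2 x - ?d q x - ?d q' x))"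
  have same: "\<And>e. ef h' e = ef h e"
  proof -
    fix e
    have "ef h' e = ef h e + \<epsilon> * (ef (?d n1) e + ef (?d n2) e - ef (?d q) e - ef (?d q') e)"
      unfolding h'_def by (rule ef_lin)
    also have "ef (?d n1) e + ef (?d n2) e - ef (?d q) e - ef (?d q') e = 0"
      using ef_delta[OF n1P, of e] ef_delta[OF n2P, of e] ef_delta[OF q(1), of e] ef_delta[OF q'(1), of e]
        ind_split[of A u "w#b'" e] ind_split[of a' u B e] ind_split[of A u B e] ind_split[of a' u "w#b'" e]
        d1 d2 qd(1) q'd(1) q(3) q'(3) n1_def n2_def by simp
    finally show "ef h' e = ef h e" by simp
  qed
  have h'K: "h' \<in> K" unfolding feasible_flows_def
  proof (intro CollectI conjI ballI allI impI)
    fix x assume "x \<in> P"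
    then have "h x \<ge> 0" using K_nonneg[OF hK] by blast
    then show "h' x \<ge> 0" unfolding h'_def using eps by (auto split: if_splits)
  next
    fix x assume "x \<notin> P"
    then show "h' x = 0" unfolding h'_def using K_out[OF hK] n1P n2P q(1) q'(1) by auto
  next
    have "sum h' P = sum h P + \<epsilon> * (sum (?d n1) P + sum (?d n2) P - sum (?d q) P - sum (?d q') P)"
      unfolding h'_def by (simp add: sum.distrib sum_subtractf sum_distrib_left algebra_simps)
    also have "\<dots> = 1" using K_sum[OF hK] finP n1P n2P q(1) q'(1) by (simp add: sum.delta)
    finally show "sum h' P = 1" .
  qed
  have "h' \<in> WE" using WE_same[OF h h'K same] .
  moreover have "h' n1 > 0"
  proof -
    have "h n1 \<ge> 0" using K_nonneg[OF hK n1P] .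
    then show ?thesis unfolding h'_def using eps by (auto split: if_splits)
  qed
  ultimately show ?thesis using n1P n1_def by blast
qed

lemma prefix_ind:
  assumes g: "g \<in> WE" and p: "p \<in> P" and pos: "\<forall>e\<in>path_edges p. ef g e > 0"
  shows "i < length p \<Longrightarrow> \<exists>h\<in>WE. \<exists>q\<in>P. h q > 0 \<and> take (Suc i) q = take (Suc i) p"
proof (induction i)
  case 0
  obtain q where q: "q \<in> P" "g q > 0" using K_pos_ex WE_K g by blast
  have "take (Suc 0) q = [vo]" using q(1) by (cases q) (auto simp: od_paths_def)
  moreover have "take (Suc 0) p = [vo]" using p by (cases p) (auto simp: od_paths_def)
  ultimately show ?case using g q by auto
next
  case (Suc i)
  then obtain h q where h: "h \<in> WE" and q: "q \<in> P" "h q > 0" and tq: "take (Suc i) q = take (Suc i) p"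
    by auto
  let ?u = "p!i" and ?w = "p!Suc i"
  have ilt: "i < length p" using Suc.prems by simp
  have "(?u, ?w) \<in> path_edges p" using pe_nth Suc.prems by blast
  then have "ef h (?u, ?w) > 0" using pos WE_unique[OF g h] by metis
  then obtain q' where q': "q' \<in> P" "(?u,?w) \<in> path_edges q'" "h q' > 0"
    using ef_pos_ex[OF WE_K[OF h]] by blast
  obtain a' b' where q's: "q' = a' @ ?u # ?w # b'" using pe_decomp[OF q'(2)] by blast
  have tp: "take (Suc i) p = take i p @ [?u]" using take_Suc_conv_app_nth[OF ilt] .
  have qs: "q = take i p @ ?u # drop (Suc i) q"
    using tq tp append_take_drop_id[of "Suc i" q] by (metis append_Cons append_assoc self_append_conv2)
  from step[OF h q qs q'(1,3) q's]
  obtain h' where h': "h' \<in> WE" "h' (take i p @ ?u # ?w # b') > 0"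
    and nP: "take i p @ ?u # ?w # b' \<in> P" by blast
  have li: "length (take i p) = i" using ilt by simp
  have "take (Suc (Suc i)) (take i p @ ?u # ?w # b') = take i p @ [?u, ?w]" using li by simp
  moreover have "take (Suc (Suc i)) p = take i p @ [?u, ?w]"
    using take_Suc_conv_app_nth[OF Suc.prems] tp by simp
  ultimately show ?case using h' nP by metis
qed

lemma splice:
  assumes g: "g \<in> WE" and p: "p \<in> P" and pos: "\<forall>e\<in>path_edges p. ef g e > 0"
  shows "\<exists>h\<in>WE. h p > 0"
proof -
  have pn: "p \<noteq> []" "last p = vd" using p by (auto simp: od_paths_def)
  then obtain h q where h: "h \<in> WE" and q: "q \<in> P" "h q > 0" and tq: "take (length p) q = p"
    using prefix_ind[OF g p pos, of "length p - 1"] by (auto simp: Suc_diff_1)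
  have qd: "distinct q" "last q = vd" using q by (auto simp: od_paths_def)
  have qs: "q = p @ drop (length p) q" using tq append_take_drop_id by metis
  have "drop (length p) q = []"
  proof (rule ccontr)
    assume ne: "drop (length p) q \<noteq> []"
    then have "last q = last (drop (length p) q)" using qs by (metis last_append)
    then have "vd \<in> set (drop (length p) q)" using ne qd(2) last_in_set by metis
    moreover have "vd \<in> set p" using pn last_in_set by metis
    ultimately show False using qd(1) qs by (metis disjoint_iff distinct_append)
  qed
  then have "q = p" using qs by simp
  then show ?thesis using h q by blast
qed

end

lemma F_cont: fixes g :: "real \<Rightarrow> real"
  assumes cont: "continuous_on {0..1} g"
  shows "continuous_on {0..1} (\<lambda>x. integral {0..x} g)"
  unfolding continuous_on_eq_continuous_within
  using integral_has_vector_derivative[OF cont] has_vector_derivative_continuous by blast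

lemma F_bound: fixes g :: "real \<Rightarrow> real"
  assumes cont: "continuous_on {0..1} g"
    and mono: "\<And>x y. 0 \<le> x \<Longrightarrow> x \<le> y \<Longrightarrow> g x \<le> g y"
    and x: "0 \<le> x" "x \<le> 1" and y: "0 \<le> y" "y \<le> 1"
  shows "integral {0..y} g - integral {0..x} g \<le> (y - x) * g y"
proof (cases "x \<le> y")
  case True
  have int: "g integrable_on {0..y}"
    by (rule integrable_continuous_interval, rule continuous_on_subset[OF cont]) (use y in auto)
  have int2: "g integrable_on {x..y}"
    by (rule integrable_continuous_interval, rule continuous_on_subset[OF cont]) (use x y in auto)
  have "integral {0..x} g + integral {x..y} g = integral {0..y} g"
    by (rule Henstock_Kurzweil_Integration.integral_combine[OF x(1) True int])
  moreover have "integral {x..y} g \<le> integral {x..y} (\<lambda>_. g y)"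
    by (rule integral_le[OF int2]) (use mono x in auto)
  moreover have "integral {x..y} (\<lambda>_. g y) = (y - x) * g y" using True by simp
  ultimately show ?thesis by linarith
next
  case False
  have int: "g integrable_on {0..x}"
    by (rule integrable_continuous_interval, rule continuous_on_subset[OF cont]) (use x in auto)
  have int2: "g integrable_on {y..x}"
    by (rule integrable_continuous_interval, rule continuous_on_subset[OF cont]) (use x y in auto)
  have "integral {0..y} g + integral {y..x} g = integral {0..x} g"
    by (rule Henstock_Kurzweil_Integration.integral_combine[OF y(1) _ int]) (use False in simp)
  moreover have "integral {y..x} (\<lambda>_. g y) \<le> integral {y..x} g"
    by (rule integral_le[OF _ int2]) (use mono y in auto)
  moreover have "integral {y..x} (\<lambda>_. g y) = (x - y) * g y" using False by simp
  ultimately show ?thesis by (simp add: algebra_simps)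
qed

context net begin

definition Fe :: "('v \<times> 'v) \<Rightarrow> real \<Rightarrow> real" where "Fe e x = integral {0..x} (c e)"
definition Phi :: "('v list \<Rightarrow> real) \<Rightarrow> real" where "Phi f = (\<Sum>e\<in>U. Fe e (ef f e))"

lemma c_cont1: "e \<in> E \<Longrightarrow> continuous_on {0..1} (c e)"
  by (rule continuous_on_subset[OF c_cont]) auto

lemma Fe_cont: "e \<in> E \<Longrightarrow> continuous_on {0..1} (Fe e)"
  unfolding Fe_def by (rule F_cont[OF c_cont1])

lemma Fe_bound: "e \<in> E \<Longrightarrow> 0 \<le> x \<Longrightarrow> x \<le> 1 \<Longrightarrow> 0 \<le> y \<Longrightarrow> y \<le> 1 \<Longrightarrow>
    Fe e y - Fe e x \<le> (y - x) * c e y"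
  unfolding Fe_def by (rule F_bound[OF c_cont1]) (auto intro: c_mono)

lemma ef_cont: "continuous_on UNIV (\<lambda>f. ef f e)"
  unfolding edge_flow_def by (intro continuous_on_sum) simp

lemma K_compact: "compact K"
proof -
  let ?B = "\<lambda>p. if p \<in> P then {0..1::real} else {0}"
  have "compactin (product_topology (\<lambda>_. euclidean) UNIV) (PiE UNIV ?B)"
    unfolding compactin_PiE by auto
  then have cS: "compact (PiE UNIV ?B)" using euclidean_product_topology by (metis compactin_euclidean_iff)
  have sc: "continuous_on UNIV (\<lambda>f::'v list \<Rightarrow> real. \<Sum>p\<in>P. f p)"
    by (intro continuous_on_sum) simp
  have cT: "closed {f. (\<Sum>p\<in>P. f p) = (1::real)}"
    using closed_Collect_eq[OF sc continuous_on_const[of UNIV 1]] by simp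
  have "K = PiE UNIV ?B \<inter> {f. (\<Sum>p\<in>P. f p) = (1::real)}"
  proof (intro equalityI subsetI)
    fix f assume f: "f \<in> K"
    have "\<And>p. p \<in> P \<Longrightarrow> f p \<le> 1"
      using member_le_sum[of _ P f] finP K_nonneg[OF f] K_sum[OF f] by fastforce
    then show "f \<in> PiE UNIV ?B \<inter> {f. (\<Sum>p\<in>P. f p) = (1::real)}"
      using K_nonneg[OF f] K_out[OF f] K_sum[OF f] by (auto simp: PiE_UNIV_domain)
  next
    fix f assume "f \<in> PiE UNIV ?B \<inter> {f. (\<Sum>p\<in>P. f p) = (1::real)}"
    then show "f \<in> K" unfolding feasible_flows_def PiE_UNIV_domain Pi_def
      by (auto split: if_splits)
  qed
  then show ?thesis using compact_Int_closed[OF cS cT] by simp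
qed

lemma K_ne: "K \<noteq> {}"
proof -
  obtain p0 where p0: "p0 \<in> P" using Pne by blast
  have "(\<lambda>p. if p = p0 then 1 else 0) \<in> K"
    unfolding feasible_flows_def using p0 finP by (auto simp: sum.delta)
  then show ?thesis by blast
qed

lemma Phi_cont: "continuous_on K Phi"
  unfolding Phi_def
proof (intro continuous_on_sum)
  fix e assume "e \<in> U"
  then have eE: "e \<in> E" using U_E by blast
  show "continuous_on K (\<lambda>f. Fe e (ef f e))"
    by (rule continuous_on_compose2[OF Fe_cont[OF eE] continuous_on_subset[OF ef_cont]])
       (auto simp: ef_nonneg ef_le1)
qed

lemma ef_lin2: "ef (\<lambda>x. h x + k * (a x - b x)) e = ef h e + k * (ef a e - ef b e)"
  unfolding edge_flow_def by (simp add: sum.distrib sum_subtractf sum_distrib_left algebra_simps)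

lemma WE_exists: "\<exists>f. f \<in> WE"
proof -
  obtain f where fK: "f \<in> K" and fmin: "\<And>g. g \<in> K \<Longrightarrow> Phi f \<le> Phi g"
    using continuous_attains_inf[OF K_compact K_ne Phi_cont] by blast
  have "f \<in> WE" unfolding wardrop_eq_def
  proof (intro CollectI conjI ballI impI fK, rule ccontr)
    fix p r assume p: "p \<in> P" "f p > 0" and r: "r \<in> P" and nle: "\<not> cost f p \<le> cost f r"
    let ?d = "\<lambda>y x. if x = y then 1 else (0::real)"
    define g where "g t = (\<lambda>x. f x + t * (?d r x - ?d p x))" for t
    define \<delta> where "\<delta> e = (if e \<in> path_edges r then 1 else 0) - (if e \<in> path_edges p then 1 else (0::real))" for e
    have rp: "r \<noteq> p" using nle by auto
    have efg: "ef (g t) e = ef f e + t * \<delta> e" for t e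
      unfolding g_def ef_lin2 \<delta>_def using ef_delta[OF r] ef_delta[OF p(1)] by simp
    have gK: "g t \<in> K" if t: "0 < t" "t \<le> f p" for t
      unfolding feasible_flows_def
    proof (intro CollectI conjI ballI allI impI)
      fix x assume "x \<in> P"
      then have "f x \<ge> 0" using K_nonneg[OF fK] by blast
      then show "g t x \<ge> 0" unfolding g_def using t rp by (auto split: if_splits)
    next
      fix x assume "x \<notin> P"
      then show "g t x = 0" unfolding g_def using K_out[OF fK] p r by auto
    next
      have "sum (g t) P = sum f P + t * (sum (?d r) P - sum (?d p) P)"
        unfolding g_def by (simp add: sum.distrib sum_subtractf sum_distrib_left algebra_simps)
      also have "\<dots> = 1" using K_sum[OF fK] finP p r by (simp add: sum.delta)
      finally show "sum (g t) P = 1" .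
    qed
    define G where "G t = (\<Sum>e\<in>U. \<delta> e * c e (ef f e + t * \<delta> e))" for t
    have bound: "Phi (g t) - Phi f \<le> t * G t" if t: "0 < t" "t \<le> f p" for t
    proof -
      have "Phi (g t) - Phi f = (\<Sum>e\<in>U. Fe e (ef (g t) e) - Fe e (ef f e))"
        unfolding Phi_def by (simp add: sum_subtractf)
      also have "\<dots> \<le> (\<Sum>e\<in>U. (ef (g t) e - ef f e) * c e (ef (g t) e))"
      proof (rule sum_mono)
        fix e assume "e \<in> U"
        then have eE: "e \<in> E" using U_E by blast
        show "Fe e (ef (g t) e) - Fe e (ef f e) \<le> (ef (g t) e - ef f e) * c e (ef (g t) e)"
          by (rule Fe_bound[OF eE ef_nonneg[OF fK] ef_le1[OF fK] ef_nonneg[OF gK[OF t]] ef_le1[OF gK[OF t]]])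
      qed
      also have "\<dots> = t * G t" unfolding G_def efg by (simp add: sum_distrib_left algebra_simps)
      finally show ?thesis .
    qed
    have G0: "G 0 = cost f r - cost f p"
    proof -
      have "G 0 = (\<Sum>e\<in>U. (if e \<in> path_edges r then W f e else 0) - (if e \<in> path_edges p then W f e else 0))"
        unfolding G_def by (intro sum.cong) (auto simp: \<delta>_def W_def)
      also have "\<dots> = (\<Sum>e\<in>U. (if e \<in> path_edges r then W f e else 0)) - (\<Sum>e\<in>U. (if e \<in> path_edges p then W f e else 0))"
        by (rule sum_subtractf)
      also have "\<dots> = sum (W f) (U \<inter> path_edges r) - sum (W f) (U \<inter> path_edges p)"
        using sum.inter_restrict[OF finU, of "W f" "path_edges r", symmetric]
          sum.inter_restrict[OF finU, of "W f" "path_edges p", symmetric] by simp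
      also have "U \<inter> path_edges r = path_edges r" using r by blast
      also have "U \<inter> path_edges p = path_edges p" using p by blast
      finally show ?thesis by (simp add: cost_W)
    qed
    have ev: "\<forall>\<^sub>F t in at_right (0::real). 0 < t \<and> t < f p"
      unfolding eventually_at_right_field using p(2) by blast
    have lim: "(G \<longlongrightarrow> G 0) (at_right 0)"
      unfolding G_def
    proof (intro tendsto_sum tendsto_mult tendsto_const)
      fix e assume "e \<in> U"
      then have eE: "e \<in> E" using U_E by blast
      show "((\<lambda>t. c e (ef f e + t * \<delta> e)) \<longlongrightarrow> c e (ef f e + 0 * \<delta> e)) (at_right 0)"
      proof (rule continuous_on_tendsto_compose[OF c_cont[OF eE]])
        show "((\<lambda>t. ef f e + t * \<delta> e) \<longlongrightarrow> ef f e + 0 * \<delta> e) (at_right 0)"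
          by (intro tendsto_intros)
        show "ef f e + 0 * \<delta> e \<in> {0..}" using ef_nonneg[OF fK] by simp
        show "\<forall>\<^sub>F t in at_right 0. ef f e + t * \<delta> e \<in> {0..}"
          using ev
        proof eventually_elim
          case (elim t)
          then have "g t \<in> K" using gK by simp
          then have "ef (g t) e \<ge> 0" by (rule ef_nonneg)
          then show ?case using efg by simp
        qed
      qed
    qed
    have "G 0 < 0" using G0 nle by simp
    then have "\<forall>\<^sub>F t in at_right (0::real). G t < 0" using order_tendstoD(2)[OF lim] by blast
    then have "\<forall>\<^sub>F t in at_right (0::real). G t < 0 \<and> 0 < t \<and> t < f p" using ev by (rule eventually_conj)
    from eventually_happens[OF this] have "\<exists>t. G t < 0 \<and> 0 < t \<and> t < f p"
      using trivial_limit_at_right_real by blast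
    then obtain t where t: "G t < 0" "0 < t" "t < f p" by blast
    have "Phi (g t) - Phi f \<le> t * G t" using bound t by simp
    also have "t * G t < 0" using t by (simp add: mult_pos_neg)
    finally have "Phi (g t) < Phi f" by simp
    moreover have "Phi f \<le> Phi (g t)" using fmin[OF gK[of t]] t by simp
    ultimately show False by simp
  qed
  then show ?thesis by blast
qed

end

context net begin

lemma part2: assumes g: "g \<in> WE" and p: "p \<in> P"
  shows "p \<in> used_paths P \<Theta> C \<phi> \<longleftrightarrow> (\<forall>e\<in>path_edges p. ef g e > 0)"
proof
  assume "p \<in> used_paths P \<Theta> C \<phi>"
  then obtain f where f: "f \<in> WE" "f p > 0" by (auto simp: used_paths_def)
  show "\<forall>e\<in>path_edges p. ef g e > 0"
  proof
    fix e assume "e \<in> path_edges p"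
    then have "ef f e \<ge> f p" using ef_ge[OF WE_K[OF f(1)] p] by blast
    then show "ef g e > 0" using WE_unique[OF f(1) g] f(2) by simp
  qed
next
  assume "\<forall>e\<in>path_edges p. ef g e > 0"
  then obtain h where "h \<in> WE" "h p > 0" using splice[OF g p] by blast
  then show "p \<in> used_paths P \<Theta> C \<phi>" using p by (auto simp: used_paths_def)
qed

lemma part1: "\<exists>f\<in>WE. \<forall>p\<in>used_paths P \<Theta> C \<phi>. f p > 0"
proof -
  let ?UP = "used_paths P \<Theta> C \<phi>"
  obtain f0 where f0: "f0 \<in> WE" using WE_exists by blast
  have UPP: "?UP \<subseteq> P" by (auto simp: used_paths_def)
  have finUP: "finite ?UP" using finite_subset[OF UPP finP] .
  define hp where "hp p = (SOME h. h \<in> WE \<and> h p > 0)" for p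
  have hp: "hp p \<in> WE \<and> hp p p > 0" if "p \<in> ?UP" for p
  proof -
    have "\<exists>h. h \<in> WE \<and> h p > 0" using that by (auto simp: used_paths_def)
    then show ?thesis unfolding hp_def by (rule someI_ex)
  qed
  define n where "n = real (card ?UP)"
  define F where "F x = (f0 x + (\<Sum>q\<in>?UP. hp q x)) / (n + 1)" for x
  have n0: "n \<ge> 0" by (simp add: n_def)
  have f0K: "f0 \<in> K" using WE_K f0 by blast
  have hK: "\<And>q. q \<in> ?UP \<Longrightarrow> hp q \<in> K" using hp WE_K by blast
  have sum_hp: "(\<Sum>x\<in>S. \<Sum>q\<in>?UP. hp q x) = (\<Sum>q\<in>?UP. \<Sum>x\<in>S. hp q x)" for S
    by (rule sum.swap)
  have FK: "F \<in> K" unfolding feasible_flows_def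
  proof (intro CollectI conjI ballI allI impI)
    fix x assume x: "x \<in> P"
    have "(\<Sum>q\<in>?UP. hp q x) \<ge> 0" by (rule sum_nonneg) (use hK K_nonneg x in blast)
    then show "F x \<ge> 0" unfolding F_def using K_nonneg[OF f0K x] n0 by simp
  next
    fix x assume x: "x \<notin> P"
    have "(\<Sum>q\<in>?UP. hp q x) = 0" by (rule sum.neutral) (use hK K_out x in blast)
    then show "F x = 0" unfolding F_def using K_out[OF f0K x] by simp
  next
    have "sum F P = (\<Sum>x\<in>P. f0 x + (\<Sum>q\<in>?UP. hp q x)) / (n + 1)"
      unfolding F_def by (rule sum_divide_distrib[symmetric])
    also have "(\<Sum>x\<in>P. f0 x + (\<Sum>q\<in>?UP. hp q x)) = sum f0 P + (\<Sum>q\<in>?UP. sum (hp q) P)"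
      unfolding sum.distrib sum_hp[of P] by simp
    also have "(\<Sum>q\<in>?UP. sum (hp q) P) = (\<Sum>q\<in>?UP. 1)" by (rule sum.cong) (use hK K_sum in auto)
    also have "\<dots> = n" by (simp add: n_def)
    finally show "sum F P = 1" using K_sum[OF f0K] n0 by simp
  qed
  have same: "ef F e = ef f0 e" for e
  proof -
    let ?S = "{p\<in>P. e \<in> path_edges p}"
    have "ef F e = (\<Sum>x\<in>?S. f0 x + (\<Sum>q\<in>?UP. hp q x)) / (n + 1)"
      unfolding F_def edge_flow_def by (rule sum_divide_distrib[symmetric])
    also have "(\<Sum>x\<in>?S. f0 x + (\<Sum>q\<in>?UP. hp q x)) = ef f0 e + (\<Sum>q\<in>?UP. ef (hp q) e)"
      unfolding sum.distrib sum_hp[of ?S] edge_flow_def by simp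
    also have "(\<Sum>q\<in>?UP. ef (hp q) e) = (\<Sum>q\<in>?UP. ef f0 e)"
    proof (rule sum.cong[OF refl])
      fix q assume q: "q \<in> ?UP"
      show "ef (hp q) e = ef f0 e" using WE_unique[OF conjunct1[OF hp[OF q]] f0] .
    qed
    also have "\<dots> = n * ef f0 e" by (simp add: n_def)
    finally have "ef F e = (ef f0 e + n * ef f0 e) / (n + 1)" .
    also have "ef f0 e + n * ef f0 e = (n + 1) * ef f0 e" by (simp add: algebra_simps)
    finally show ?thesis using n0 by simp
  qed
  have FWE: "F \<in> WE" using WE_same[OF f0 FK same] .
  have "F p > 0" if p: "p \<in> ?UP" for p
  proof -
    have "(\<Sum>q\<in>?UP. hp q p) \<ge> hp p p"
      by (rule member_le_sum) (use p finUP hK K_nonneg UPP in auto)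
    moreover have "f0 p \<ge> 0" using K_nonneg[OF f0K] UPP p by blast
    ultimately show ?thesis unfolding F_def using hp[OF p] n0 by (simp add: add_pos_nonneg)
  qed
  then show ?thesis using FWE by blast
qed

end

theorem lemma2:
  fixes V :: "'v set" and E :: "('v \<times> 'v) set" and vo vd :: 'v
    and \<Theta> :: "'s set" and C :: "'s \<Rightarrow> ('v \<times> 'v) \<Rightarrow> real \<Rightarrow> real" and \<phi> :: "'s \<Rightarrow> real"
  defines "P \<equiv> od_paths V E vo vd"
  assumes "finite V" and "E \<subseteq> V \<times> V" and "vo \<in> V" and "vd \<in> V"
    and "P \<noteq> {}"
    and "finite \<Theta>"
    and "\<And>s e. s \<in> \<Theta> \<Longrightarrow> e \<in> E \<Longrightarrow> continuous_on {0..} (C s e)"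
    and "\<And>s e. s \<in> \<Theta> \<Longrightarrow> e \<in> E \<Longrightarrow> strict_mono_on {0..} (C s e)"
    and "\<And>s e x. s \<in> \<Theta> \<Longrightarrow> e \<in> E \<Longrightarrow> x \<ge> 0 \<Longrightarrow> C s e x \<ge> 0"
    and "\<phi> \<in> prob_simplex \<Theta>"
  shows "(\<exists>f\<in>wardrop_eq P \<Theta> C \<phi>. \<forall>p\<in>used_paths P \<Theta> C \<phi>. f p > 0)
       \<and> (\<forall>g\<in>wardrop_eq P \<Theta> C \<phi>. \<forall>p\<in>P.
            p \<in> used_paths P \<Theta> C \<phi> \<longleftrightarrow> (\<forall>e\<in>path_edges p. edge_flow P g e > 0))"
proof -
  interpret net V E vo vd \<Theta> C \<phi>
    by unfold_locales (use assms in \<open>simp_all add: P_def\<close>)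
  show ?thesis unfolding P_def using part1 part2 by blast
qed

end
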